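(* Let $\vec w\in\mathbb R^n$ be $\tau$-regular with $\sum_i (w^{(i)})^2=1$, let $\gamma\in(0,1]$, and let $\mathcal D$ be any distribution on $\{0,1\}^n$. Let $\vec y$ be drawn from the $\gamma$-noisy version $\tilde{\mathcal D}$ of $\mathcal D$. Then for every interval $[a,b]$, $$\Pr\big[\langle \vec w,\vec y\rangle\in[a,b]\big]\le \frac{4|b-a|}{\sqrt\gamma}+\frac{4\tau}{\sqrt\gamma}+2e^{-\gamma^2/(2\tau^2)}.$$
   Context: A vector $\vec w\in\mathbb R^n$ is $\tau$-regular if $\max_i|w^{(i)}|\le \tau\|\vec w\|_2$. For a distribution $\mathcal D$ on $\{0,1\}^n$ and $\gamma\in[0,1]$, the $\gamma$-noisy version $\tilde{\mathcal D}$ is the distribution of $\vec y$ obtained by sampling $\vec x\sim\mathcal D$ and then, independently for each coordinate $i$, setting $y^{(i)}=x^{(i)}$ with probability $1-\gamma$ and $y^{(i)}=$ a fresh uniformly random bit with probability $\gamma$. *)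

theory Defs
  imports "HOL-Probability.Probability"
begin

text \<open>Vectors in R^n are functions nat => real indexed by {..<n}; points of {0,1}^n
  are functions nat => bool (coordinate i is 1 iff true), only coordinates < n matter.\<close>

definition tau_regular :: "nat \<Rightarrow> real \<Rightarrow> (nat \<Rightarrow> real) \<Rightarrow> bool" where
  "tau_regular n \<tau> w \<longleftrightarrow> (\<forall>i<n. \<bar>w i\<bar> \<le> \<tau> * sqrt (\<Sum>j<n. (w j)\<^sup>2))"

definition noisy_bit :: "real \<Rightarrow> bool \<Rightarrow> bool pmf" where
  "noisy_bit \<gamma> b = bind_pmf (bernoulli_pmf \<gamma>)
      (\<lambda>r. if r then bernoulli_pmf (1/2) else return_pmf b)"

definition noisy_version :: "nat \<Rightarrow> real \<Rightarrow> (nat \<Rightarrow> bool) pmf \<Rightarrow> (nat \<Rightarrow> bool) pmf" where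
  "noisy_version n \<gamma> D = bind_pmf D (\<lambda>x. Pi_pmf {..<n} False (\<lambda>i. noisy_bit \<gamma> (x i)))"

definition bit_inner :: "nat \<Rightarrow> (nat \<Rightarrow> real) \<Rightarrow> (nat \<Rightarrow> bool) \<Rightarrow> real" where
  "bit_inner n w y = (\<Sum>i<n. w i * (if y i then 1 else 0))"

end

theory Submission
  imports Defs
begin


lemma gauss_bound:
  fixes c T :: real
  assumes c: "c > 0" and T: "T \<ge> 0"
  shows "integral {0..T} (\<lambda>u. exp (- c * u\<^sup>2)) \<le> sqrt pi / (2 * sqrt c)"
proof -
  define S where "S = sqrt c * T"
  have S: "S \<ge> 0" using c T by (simp add: S_def)
  have intg: "integrable lborel (\<lambda>v. indicator {0..} v *\<^sub>R exp (- v\<^sup>2) :: real)"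
    and i0: "integral\<^sup>L lborel (\<lambda>v. indicator {0..} v *\<^sub>R exp (- v\<^sup>2) :: real) = sqrt pi / 2"
    using gaussian_moment_0 by (auto simp: has_bochner_integral_iff)
  then have h0: "((\<lambda>v. indicator {0..} v *\<^sub>R exp (- v\<^sup>2) :: real) has_integral sqrt pi / 2) UNIV"
    using has_integral_integral_lborel[OF intg] unfolding i0 by blast
  define J where "J = integral {0..S} (\<lambda>v. exp (- v\<^sup>2))"
  have I1: "((\<lambda>v. exp (- v\<^sup>2)) has_integral J) {0..S}"
    unfolding J_def by (intro integrable_integral integrable_continuous_interval continuous_intros)
  then have I2: "((\<lambda>v. if v \<in> {0..S} then exp (- v\<^sup>2) else 0) has_integral J) UNIV"
    by (simp only: has_integral_restrict_UNIV)
  have "J \<le> sqrt pi / 2"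
    by (rule has_integral_le[OF I2 h0]) (auto simp: indicator_def)
  have sc: "sqrt c \<noteq> 0" using c by simp
  from has_integral_stretch_real[OF I1 sc]
  have I3: "((\<lambda>x. exp (- (sqrt c * x)\<^sup>2)) has_integral (1 / \<bar>sqrt c\<bar>) *\<^sub>R J) ((\<lambda>x. x / sqrt c) ` {0..S})" .
  have img: "(\<lambda>x. x / sqrt c) ` {0..S} = {0..T}"
  proof
    show "(\<lambda>x. x / sqrt c) ` {0..S} \<subseteq> {0..T}" using c by (auto simp: S_def)
    show "{0..T} \<subseteq> (\<lambda>x. x / sqrt c) ` {0..S}"
    proof
      fix x assume "x \<in> {0..T}"
      then have "sqrt c * x \<in> {0..S}" using c by (auto simp: S_def mult_left_mono)
      moreover have "x = (sqrt c * x) / sqrt c" using sc by simp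
      ultimately show "x \<in> (\<lambda>x. x / sqrt c) ` {0..S}" by blast
    qed
  qed
  have eq: "(\<lambda>x. exp (- (sqrt c * x)\<^sup>2)) = (\<lambda>u. exp (- c * u\<^sup>2))"
    using c by (auto simp: power_mult_distrib)
  from I3 have "((\<lambda>u. exp (- c * u\<^sup>2)) has_integral J / sqrt c) {0..T}"
    unfolding img eq using c by simp
  then have "integral {0..T} (\<lambda>u. exp (- c * u\<^sup>2)) = J / sqrt c" by blast
  also have "\<dots> \<le> (sqrt pi / 2) / sqrt c"
    using \<open>J \<le> sqrt pi / 2\<close> c by (intro divide_right_mono) auto
  finally show ?thesis by simp
qed




lemma abs_sin_ge: "\<bar>sin (z::real)\<bar> \<ge> \<bar>z\<bar> - \<bar>z\<bar>^3 / 6"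
proof -
  have "\<bar>sin z - (\<Sum>m<3. sin_coeff m * z ^ m)\<bar> \<le> inverse (fact 3) * \<bar>z\<bar> ^ 3"
    by (rule Maclaurin_sin_bound)
  moreover have "(\<Sum>m<3. sin_coeff m * z ^ m) = z"
    by (simp add: numeral_3_eq_3 lessThan_Suc sin_coeff_def)
  moreover have "inverse (fact 3 :: real) = 1/6" by (simp add: numeral_3_eq_3)
  ultimately have "\<bar>sin z - z\<bar> \<le> \<bar>z\<bar>^3 / 6" by simp
  then show ?thesis by linarith
qed

lemma sin_sq_ge:
  fixes z B :: real
  assumes "\<bar>z\<bar> \<le> B" "B\<^sup>2 \<le> 6"
  shows "(sin z)\<^sup>2 \<ge> ((1 - B\<^sup>2/6) * z)\<^sup>2"
proof -
  have "\<bar>z\<bar>^3 / 6 = \<bar>z\<bar> * (\<bar>z\<bar>\<^sup>2 / 6)" by (simp add: power2_eq_square power3_eq_cube)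
  moreover have "\<bar>z\<bar>\<^sup>2 \<le> B\<^sup>2" using assms(1) by (metis abs_ge_zero power_mono)
  ultimately have "\<bar>z\<bar>^3 / 6 \<le> \<bar>z\<bar> * (B\<^sup>2/6)"
    by (simp add: mult_left_mono)
  with abs_sin_ge[of z] have h: "\<bar>sin z\<bar> \<ge> (1 - B\<^sup>2/6) * \<bar>z\<bar>" by (simp add: algebra_simps)
  have "0 \<le> (1 - B\<^sup>2/6) * \<bar>z\<bar>" using assms by simp
  then have "((1 - B\<^sup>2/6) * \<bar>z\<bar>)\<^sup>2 \<le> \<bar>sin z\<bar>\<^sup>2" using h by (intro power_mono) auto
  then show ?thesis by (simp add: power_mult_distrib)
qed

lemma kernel_has_integral:
  fixes \<alpha> y :: real
  assumes a: "\<alpha> > 0"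
  shows "((\<lambda>u. (1 - u / (2*\<alpha>)) * cos (u * y)) has_integral
           (if y = 0 then \<alpha> else (sin (\<alpha> * y))\<^sup>2 / (\<alpha> * y\<^sup>2))) {0..2*\<alpha>}"
proof (cases "y = 0")
  case True
  define F where "F u = u - u\<^sup>2 / (4*\<alpha>)" for u
  have d: "(F has_real_derivative (1 - u / (2*\<alpha>))) (at u)" for u
    using a unfolding F_def
    by (auto intro!: derivative_eq_intros simp: field_simps power2_eq_square)
  have "((\<lambda>u. (1 - u / (2*\<alpha>))) has_integral (F (2*\<alpha>) - F 0)) {0..2*\<alpha>}"
    using a
    by (intro fundamental_theorem_of_calculus)
       (auto intro!: has_vector_derivative_at_within d[THEN has_real_derivative_iff_has_vector_derivative[THEN iffD1]])
  moreover have "F (2*\<alpha>) - F 0 = \<alpha>" using a by (simp add: F_def field_simps power2_eq_square)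
  ultimately show ?thesis using True by simp
next
  case False
  define F where "F u = (1 - u / (2*\<alpha>)) * sin (u * y) / y - cos (u * y) / (2*\<alpha>*y\<^sup>2)" for u
  have d: "(F has_real_derivative ((1 - u / (2*\<alpha>)) * cos (u * y))) (at u)" for u
    using a False unfolding F_def
    by (auto intro!: derivative_eq_intros simp: field_simps power2_eq_square)
  have "((\<lambda>u. (1 - u / (2*\<alpha>)) * cos (u * y)) has_integral (F (2*\<alpha>) - F 0)) {0..2*\<alpha>}"
    using a
    by (intro fundamental_theorem_of_calculus)
       (auto intro!: has_vector_derivative_at_within d[THEN has_real_derivative_iff_has_vector_derivative[THEN iffD1]])
  moreover have "F (2*\<alpha>) - F 0 = (sin (\<alpha> * y))\<^sup>2 / (\<alpha> * y\<^sup>2)"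
  proof -
    have e: "cos (\<alpha> * (y * 2)) = 1 - 2 * (sin (\<alpha> * y) * sin (\<alpha> * y))"
    proof -
      have "cos (\<alpha> * (y * 2)) = cos (2 * (\<alpha> * y))" by (rule arg_cong[where f=cos]) simp
      also have "\<dots> = 1 - 2 * (sin (\<alpha> * y))\<^sup>2" by (rule cos_double_sin)
      finally show ?thesis by (simp only: power2_eq_square)
    qed
    show ?thesis using a False
      apply (simp add: F_def field_simps power2_eq_square)
      apply (simp add: e algebra_simps)
      done
  qed
  ultimately show ?thesis using False by simp
qed




lemma pmf_noisy_bit_True:
  assumes "0 \<le> \<gamma>" "\<gamma> \<le> 1"
  shows "pmf (noisy_bit \<gamma> b) True = (if b then 1 - \<gamma>/2 else \<gamma>/2)"
  using assms unfolding noisy_bit_def pmf_bind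
  by (subst integral_bernoulli_pmf) (auto simp: pmf_return)

lemma pmf_noisy_bit_False:
  assumes "0 \<le> \<gamma>" "\<gamma> \<le> 1"
  shows "pmf (noisy_bit \<gamma> b) False = (if b then \<gamma>/2 else 1 - \<gamma>/2)"
  using assms unfolding noisy_bit_def pmf_bind
  by (subst integral_bernoulli_pmf) (auto simp: pmf_return)

lemma finite_set_Pi_bool:
  assumes "finite A"
  shows "finite (set_pmf (Pi_pmf A dflt (p :: _ \<Rightarrow> bool pmf)))"
  by (rule finite_subset[OF set_Pi_pmf_subset'[OF assms]]) (use assms in auto)

lemma expectation_pair_bool:
  fixes g :: "bool \<times> 'a \<Rightarrow> real"
  assumes fin: "finite (set_pmf P)"
  shows "measure_pmf.expectation (pair_pmf B P) g =
     pmf B True * measure_pmf.expectation P (\<lambda>f. g (True, f)) +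
     pmf B False * measure_pmf.expectation P (\<lambda>f. g (False, f))"
proof -
  have "measure_pmf.expectation (pair_pmf B P) g = (\<Sum>z\<in>UNIV \<times> set_pmf P. g z * pmf (pair_pmf B P) z)"
    using fin by (intro integral_measure_pmf_real) auto
  also have "\<dots> = (\<Sum>b\<in>UNIV. \<Sum>f\<in>set_pmf P. g (b, f) * (pmf B b * pmf P f))"
    unfolding sum.cartesian_product by (intro sum.cong) (auto simp: pmf_pair)
  also have "\<dots> = (\<Sum>b\<in>UNIV. pmf B b * (\<Sum>f\<in>set_pmf P. g (b, f) * pmf P f))"
    by (simp add: sum_distrib_left algebra_simps)
  also have "\<dots> = (\<Sum>b\<in>UNIV. pmf B b * measure_pmf.expectation P (\<lambda>f. g (b, f)))"
    using fin by (subst integral_measure_pmf_real[of "set_pmf P"]) auto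
  also have "\<dots> = pmf B True * measure_pmf.expectation P (\<lambda>f. g (True, f)) +
     pmf B False * measure_pmf.expectation P (\<lambda>f. g (False, f))"
    by (simp add: UNIV_bool)
  finally show ?thesis .
qed

lemma exp_cos_shift:
  fixes h :: "'a \<Rightarrow> real"
  assumes fin: "finite (set_pmf P)"
  shows "measure_pmf.expectation P (\<lambda>f. cos (c + h f)) =
      cos c * measure_pmf.expectation P (\<lambda>f. cos (h f)) - sin c * measure_pmf.expectation P (\<lambda>f. sin (h f))"
    and "measure_pmf.expectation P (\<lambda>f. sin (c + h f)) =
      sin c * measure_pmf.expectation P (\<lambda>f. cos (h f)) + cos c * measure_pmf.expectation P (\<lambda>f. sin (h f))"
proof -
  have I: "integrable (measure_pmf P) f" for f :: "'a \<Rightarrow> real"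
    using fin by (rule integrable_measure_pmf_finite)
  show "measure_pmf.expectation P (\<lambda>f. cos (c + h f)) =
      cos c * measure_pmf.expectation P (\<lambda>f. cos (h f)) - sin c * measure_pmf.expectation P (\<lambda>f. sin (h f))"
    by (simp add: cos_add I)
  show "measure_pmf.expectation P (\<lambda>f. sin (c + h f)) =
      sin c * measure_pmf.expectation P (\<lambda>f. cos (h f)) + cos c * measure_pmf.expectation P (\<lambda>f. sin (h f))"
    by (simp add: sin_add I)
qed

definition SS :: "nat set \<Rightarrow> (nat \<Rightarrow> real) \<Rightarrow> (nat \<Rightarrow> bool) \<Rightarrow> real" where
  "SS A w y = (\<Sum>i\<in>A. w i * (if y i then 1 else 0))"

lemma step_algebra:
  fixes p0 p1 C D a \<gamma> :: real
  assumes "p0 + p1 = 1" "4 * p0 * p1 \<ge> \<gamma>"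
  shows "(p1 * (cos a * C - sin a * D) + p0 * C)\<^sup>2 + (p1 * (sin a * C + cos a * D) + p0 * D)\<^sup>2
         \<le> (C\<^sup>2 + D\<^sup>2) * (1 - \<gamma> * (sin (a/2))\<^sup>2)"
proof -
  have sc: "sin a * sin a + cos a * cos a = 1" by (simp add: sin_cos_squared_add3 add.commute)
  have "(p1 * (cos a * C - sin a * D) + p0 * C)\<^sup>2 + (p1 * (sin a * C + cos a * D) + p0 * D)\<^sup>2
      = (C\<^sup>2 + D\<^sup>2) * (1 - 2 * p0 * p1 * (1 - cos a))"
    using assms(1) sc unfolding power2_eq_square by algebra
  also have "1 - cos a = 2 * (sin (a/2))\<^sup>2"
    using cos_double_sin[of "a/2"] by simp
  also have "(C\<^sup>2 + D\<^sup>2) * (1 - 2 * p0 * p1 * (2 * (sin (a/2))\<^sup>2)) =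
             (C\<^sup>2 + D\<^sup>2) * (1 - (4 * p0 * p1) * (sin (a/2))\<^sup>2)" by (simp add: algebra_simps)
  also have "\<dots> \<le> (C\<^sup>2 + D\<^sup>2) * (1 - \<gamma> * (sin (a/2))\<^sup>2)"
    using assms(2) by (intro mult_left_mono) (auto intro: mult_right_mono)
  finally show ?thesis .
qed




lemma SS_insert_upd:
  assumes "finite A" "i \<notin> A"
  shows "SS (insert i A) w (f(i:=b)) = w i * (if b then 1 else 0) + SS A w f"
  unfolding SS_def using assms
  by (simp add: sum.insert) (intro sum.cong, auto)

lemma char_bound:
  fixes x :: "nat \<Rightarrow> bool" and w :: "nat \<Rightarrow> real" and u \<gamma> :: real
  assumes "finite A" "0 \<le> \<gamma>" "\<gamma> \<le> 1"
  shows "(measure_pmf.expectation (Pi_pmf A False (\<lambda>i. noisy_bit \<gamma> (x i))) (\<lambda>y. cos (u * SS A w y)))\<^sup>2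
       + (measure_pmf.expectation (Pi_pmf A False (\<lambda>i. noisy_bit \<gamma> (x i))) (\<lambda>y. sin (u * SS A w y)))\<^sup>2
       \<le> (\<Prod>i\<in>A. 1 - \<gamma> * (sin (u * w i / 2))\<^sup>2)"
  using assms(1)
proof (induction A rule: finite_induct)
  case empty
  then show ?case by (simp add: SS_def)
next
  case (insert i A)
  define P where "P = Pi_pmf A False (\<lambda>i. noisy_bit \<gamma> (x i))"
  define nb where "nb = noisy_bit \<gamma> (x i)"
  define C where "C = measure_pmf.expectation P (\<lambda>y. cos (u * SS A w y))"
  define D where "D = measure_pmf.expectation P (\<lambda>y. sin (u * SS A w y))"
  define p1 where "p1 = pmf nb True"
  define p0 where "p0 = pmf nb False"
  define a where "a = u * w i"
  have finP: "finite (set_pmf P)" unfolding P_def using insert.hyps(1) by (rule finite_set_Pi_bool)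
  have PI: "Pi_pmf (insert i A) False (\<lambda>i. noisy_bit \<gamma> (x i)) = map_pmf (\<lambda>(y,f). f(i:=y)) (pair_pmf nb P)"
    unfolding P_def nb_def using insert.hyps by (rule Pi_pmf_insert)
  have ss: "u * SS (insert i A) w (f(i:=b)) = (if b then a else 0) + u * SS A w f" for f b
    using SS_insert_upd[OF insert.hyps, of w f b] by (simp add: a_def algebra_simps)
  have C': "measure_pmf.expectation (Pi_pmf (insert i A) False (\<lambda>i. noisy_bit \<gamma> (x i))) (\<lambda>y. cos (u * SS (insert i A) w y))
      = p1 * (cos a * C - sin a * D) + p0 * C"
    unfolding PI integral_map_pmf
    apply (subst expectation_pair_bool[OF finP])
    apply (simp add: ss exp_cos_shift[OF finP] p1_def p0_def C_def D_def)
    done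
  have D': "measure_pmf.expectation (Pi_pmf (insert i A) False (\<lambda>i. noisy_bit \<gamma> (x i))) (\<lambda>y. sin (u * SS (insert i A) w y))
      = p1 * (sin a * C + cos a * D) + p0 * D"
    unfolding PI integral_map_pmf
    apply (subst expectation_pair_bool[OF finP])
    apply (simp add: ss exp_cos_shift[OF finP] p1_def p0_def C_def D_def)
    done
  have gg: "\<gamma> * \<gamma> \<le> \<gamma>" using assms(2,3) by (simp add: mult_left_le_one_le)
  have p01: "p0 + p1 = 1" "4 * p0 * p1 \<ge> \<gamma>"
    using assms(2,3) gg by (auto simp: p0_def p1_def nb_def pmf_noisy_bit_True pmf_noisy_bit_False algebra_simps)
  have f0: "0 \<le> 1 - \<gamma> * (sin (u * w i / 2))\<^sup>2"
  proof -
    have "(sin (u * w i / 2))\<^sup>2 \<le> 1" by (simp add: abs_square_le_1)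
    then have "\<gamma> * (sin (u * w i / 2))\<^sup>2 \<le> 1 * 1" using assms(2,3) by (intro mult_mono) auto
    then show ?thesis by simp
  qed
  have "(p1 * (cos a * C - sin a * D) + p0 * C)\<^sup>2 + (p1 * (sin a * C + cos a * D) + p0 * D)\<^sup>2
         \<le> (C\<^sup>2 + D\<^sup>2) * (1 - \<gamma> * (sin (a/2))\<^sup>2)"
    by (rule step_algebra[OF p01])
  also have "\<dots> \<le> (\<Prod>i\<in>A. 1 - \<gamma> * (sin (u * w i / 2))\<^sup>2) * (1 - \<gamma> * (sin (u * w i / 2))\<^sup>2)"
    using insert.IH f0 unfolding a_def C_def D_def P_def by (intro mult_right_mono) auto
  also have "\<dots> = (\<Prod>i\<in>insert i A. 1 - \<gamma> * (sin (u * w i / 2))\<^sup>2)"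
    using insert.hyps by simp
  finally show ?case unfolding C' D' .
qed




lemma cs_bound:
  fixes p q C D :: real
  assumes "p\<^sup>2 + q\<^sup>2 = 1"
  shows "(p * C - q * D)\<^sup>2 \<le> C\<^sup>2 + D\<^sup>2"
proof -
  have "(p * C - q * D)\<^sup>2 + (p * D + q * C)\<^sup>2 = (p\<^sup>2 + q\<^sup>2) * (C\<^sup>2 + D\<^sup>2)"
    by (simp add: power2_eq_square algebra_simps)
  with assms have "(p * C - q * D)\<^sup>2 + (p * D + q * C)\<^sup>2 = C\<^sup>2 + D\<^sup>2" by simp
  moreover have "0 \<le> (p * D + q * C)\<^sup>2" by simp
  ultimately show ?thesis by linarith
qed

lemma ecos_bound:
  fixes x :: "nat \<Rightarrow> bool" and w :: "nat \<Rightarrow> real"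
  assumes tau: "\<forall>i<n. \<bar>w i\<bar> \<le> \<tau>" and sw: "(\<Sum>i<n. (w i)\<^sup>2) = 1"
    and g: "0 \<le> \<gamma>" "\<gamma> \<le> 1"
    and ub: "\<bar>u\<bar> * \<tau> \<le> 2 * (7/5)"
  shows "measure_pmf.expectation (Pi_pmf {..<n} False (\<lambda>i. noisy_bit \<gamma> (x i)))
            (\<lambda>y. cos (u * (SS {..<n} w y - x0))) \<le> exp (- (\<gamma> * (101/150)\<^sup>2 / 8) * u\<^sup>2)"
proof -
  define P where "P = Pi_pmf {..<n} False (\<lambda>i. noisy_bit \<gamma> (x i))"
  define C where "C = measure_pmf.expectation P (\<lambda>y. cos (u * SS {..<n} w y))"
  define D where "D = measure_pmf.expectation P (\<lambda>y. sin (u * SS {..<n} w y))"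
  define \<kappa> :: real where "\<kappa> = 101/150"
  have finP: "finite (set_pmf P)" unfolding P_def by (rule finite_set_Pi_bool) simp
  have CD: "C\<^sup>2 + D\<^sup>2 \<le> (\<Prod>i<n. 1 - \<gamma> * (sin (u * w i / 2))\<^sup>2)"
    unfolding C_def D_def P_def using char_bound[of "{..<n}" \<gamma> x u w] g by simp
  have f0: "0 \<le> 1 - \<gamma> * (sin (u * w i / 2))\<^sup>2" for i
  proof -
    have "(sin (u * w i / 2))\<^sup>2 \<le> 1" by (simp add: abs_square_le_1)
    then have "\<gamma> * (sin (u * w i / 2))\<^sup>2 \<le> 1 * 1" using g by (intro mult_mono) auto
    then show ?thesis by simp
  qed
  have "(\<Prod>i<n. 1 - \<gamma> * (sin (u * w i / 2))\<^sup>2) \<le> (\<Prod>i<n. exp (- (\<gamma> * (sin (u * w i / 2))\<^sup>2)))"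
  proof (intro prod_mono conjI)
    fix i
    show "0 \<le> 1 - \<gamma> * (sin (u * w i / 2))\<^sup>2" by (rule f0)
    show "1 - \<gamma> * (sin (u * w i / 2))\<^sup>2 \<le> exp (- (\<gamma> * (sin (u * w i / 2))\<^sup>2))"
      using exp_ge_add_one_self[of "- (\<gamma> * (sin (u * w i / 2))\<^sup>2)"] by simp
  qed
  also have "\<dots> = exp (- (\<gamma> * (\<Sum>i<n. (sin (u * w i / 2))\<^sup>2)))"
    by (simp add: exp_sum[symmetric] sum_negf sum_distrib_left)
  also have "\<dots> \<le> exp (- (\<gamma> * (\<kappa>\<^sup>2 * u\<^sup>2 / 4)))"
  proof -
    have "(\<kappa> * (u * w i / 2))\<^sup>2 \<le> (sin (u * w i / 2))\<^sup>2" if "i < n" for i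
    proof -
      have "\<bar>u * w i / 2\<bar> = \<bar>u\<bar> * \<bar>w i\<bar> / 2" by (simp add: abs_mult)
      also have "\<dots> \<le> \<bar>u\<bar> * \<tau> / 2" using tau that by (intro divide_right_mono mult_left_mono) auto
      also have "\<dots> \<le> 7/5" using ub by simp
      finally have "\<bar>u * w i / 2\<bar> \<le> 7/5" .
      have "((1 - (7/5)\<^sup>2/6) * (u * w i / 2))\<^sup>2 \<le> (sin (u * w i / 2))\<^sup>2"
        by (rule sin_sq_ge[OF \<open>\<bar>u * w i / 2\<bar> \<le> 7/5\<close>]) (simp add: power2_eq_square)
      moreover have "(1 - (7/5)\<^sup>2/6 :: real) = \<kappa>" by (simp add: \<kappa>_def power2_eq_square)
      ultimately show ?thesis by simp
    qed
    then have "(\<Sum>i<n. (\<kappa> * (u * w i / 2))\<^sup>2) \<le> (\<Sum>i<n. (sin (u * w i / 2))\<^sup>2)"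
      by (intro sum_mono) auto
    also have "(\<Sum>i<n. (\<kappa> * (u * w i / 2))\<^sup>2) = \<kappa>\<^sup>2 * u\<^sup>2 / 4 * (\<Sum>i<n. (w i)\<^sup>2)"
      by (simp add: sum_distrib_left power_mult_distrib power_divide algebra_simps)
    finally have "\<kappa>\<^sup>2 * u\<^sup>2 / 4 \<le> (\<Sum>i<n. (sin (u * w i / 2))\<^sup>2)" using sw by simp
    then have "\<gamma> * (\<kappa>\<^sup>2 * u\<^sup>2 / 4) \<le> \<gamma> * (\<Sum>i<n. (sin (u * w i / 2))\<^sup>2)"
      using g by (intro mult_left_mono) auto
    then show ?thesis by simp
  qed
  finally have CD2: "C\<^sup>2 + D\<^sup>2 \<le> exp (- (\<gamma> * (\<kappa>\<^sup>2 * u\<^sup>2 / 4)))" using CD by linarith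
  have "measure_pmf.expectation P (\<lambda>y. cos (u * (SS {..<n} w y - x0)))
      = measure_pmf.expectation P (\<lambda>y. cos ((- u * x0) + u * SS {..<n} w y))"
    by (simp add: algebra_simps)
  also have "\<dots> = cos (- u * x0) * C - sin (- u * x0) * D"
    unfolding C_def D_def by (rule exp_cos_shift(1)[OF finP])
  finally have E: "measure_pmf.expectation P (\<lambda>y. cos (u * (SS {..<n} w y - x0))) = cos (- u * x0) * C - sin (- u * x0) * D" .
  have "(cos (- u * x0) * C - sin (- u * x0) * D)\<^sup>2 \<le> C\<^sup>2 + D\<^sup>2"
    by (rule cs_bound) simp
  also note CD2
  also have "exp (- (\<gamma> * (\<kappa>\<^sup>2 * u\<^sup>2 / 4))) = (exp (- (\<gamma> * \<kappa>\<^sup>2 / 8) * u\<^sup>2))\<^sup>2"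
    by (simp add: power2_eq_square exp_add[symmetric])
  finally have "(cos (- u * x0) * C - sin (- u * x0) * D)\<^sup>2 \<le> (exp (- (\<gamma> * \<kappa>\<^sup>2 / 8) * u\<^sup>2))\<^sup>2" .
  then have "cos (- u * x0) * C - sin (- u * x0) * D \<le> exp (- (\<gamma> * \<kappa>\<^sup>2 / 8) * u\<^sup>2)"
    by (rule power2_le_imp_le) simp
  then show ?thesis using E unfolding P_def \<kappa>_def by simp
qed




lemma K_lower:
  fixes \<alpha> y h :: real
  assumes a: "\<alpha> > 0" and y: "\<bar>y\<bar> \<le> h" and ah: "\<alpha> * h \<le> 3/5"
  shows "(if y = 0 then \<alpha> else (sin (\<alpha> * y))\<^sup>2 / (\<alpha> * y\<^sup>2)) \<ge> \<alpha> * (47/50)\<^sup>2"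
proof (cases "y = 0")
  case True then show ?thesis using a by (simp add: power2_eq_square)
next
  case False
  have "\<bar>\<alpha> * y\<bar> \<le> \<alpha> * h" using a y by (simp add: abs_mult)
  then have "\<bar>\<alpha> * y\<bar> \<le> 3/5" using ah by linarith
  then have "((1 - (3/5)\<^sup>2/6) * (\<alpha> * y))\<^sup>2 \<le> (sin (\<alpha> * y))\<^sup>2"
    by (rule sin_sq_ge) (simp add: power2_eq_square)
  moreover have "((1 - (3/5)\<^sup>2/6) * (\<alpha> * y))\<^sup>2 = (47/50)\<^sup>2 * \<alpha>\<^sup>2 * (y\<^sup>2::real)"
    by (simp add: power2_eq_square)
  ultimately have s: "(47/50)\<^sup>2 * \<alpha>\<^sup>2 * y\<^sup>2 \<le> (sin (\<alpha> * y))\<^sup>2" by simp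
  have "\<alpha> * (47/50)\<^sup>2 = ((47/50)\<^sup>2 * \<alpha>\<^sup>2 * y\<^sup>2) / (\<alpha> * y\<^sup>2)"
    using a False by (simp add: power2_eq_square field_simps)
  also have "\<dots> \<le> (sin (\<alpha> * y))\<^sup>2 / (\<alpha> * y\<^sup>2)"
    using s a False by (intro divide_right_mono) auto
  finally show ?thesis using False by simp
qed

lemma K_nonneg:
  fixes \<alpha> y :: real
  assumes a: "\<alpha> > 0"
  shows "(if y = 0 then \<alpha> else (sin (\<alpha> * y))\<^sup>2 / (\<alpha> * y\<^sup>2)) \<ge> 0"
  using a by auto

lemma per_x:
  fixes x :: "nat \<Rightarrow> bool" and w :: "nat \<Rightarrow> real"
  assumes tau: "\<forall>i<n. \<bar>w i\<bar> \<le> \<tau>" and tpos: "\<tau> > 0" and sw: "(\<Sum>i<n. (w i)\<^sup>2) = 1"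
    and g: "0 < \<gamma>" "\<gamma> \<le> 1" and ab: "a \<le> b"
  shows "measure_pmf.prob (Pi_pmf {..<n} False (\<lambda>i. noisy_bit \<gamma> (x i))) {y. SS {..<n} w y \<in> {a..b}}
           \<le> 4 * (b - a) / sqrt \<gamma> + 4 * \<tau> / sqrt \<gamma>"
proof -
  define P where "P = Pi_pmf {..<n} False (\<lambda>i. noisy_bit \<gamma> (x i))"
  define S where "S = SS {..<n} w"
  define h where "h = (b - a) / 2"
  define x0 where "x0 = (a + b) / 2"
  define \<alpha> where "\<alpha> = 1 / (\<tau> / (7/5) + h / (3/5))"
  define \<kappa> :: real where "\<kappa> = 101/150"
  define m :: real where "m = (47/50)\<^sup>2"
  define c where "c = \<gamma> * \<kappa>\<^sup>2 / 8"
  define K where "K y = (if y = 0 then \<alpha> else (sin (\<alpha> * y))\<^sup>2 / (\<alpha> * y\<^sup>2))" for y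
  define F where "F = set_pmf P"
  have h0: "h \<ge> 0" using ab by (simp add: h_def)
  have den: "\<tau> / (7/5) + h / (3/5) > 0" using tpos h0 by simp
  have apos: "\<alpha> > 0" using den by (simp add: \<alpha>_def)
  have inv: "1 / \<alpha> = \<tau> / (7/5) + h / (3/5)" by (simp add: \<alpha>_def)
  have at: "\<alpha> * \<tau> \<le> 7/5"
  proof -
    have "\<tau> / (7/5) \<le> 1 / \<alpha>" using inv h0 by simp
    then show ?thesis using apos by (simp add: field_simps)
  qed
  have ah: "\<alpha> * h \<le> 3/5"
  proof -
    have "h / (3/5) \<le> 1 / \<alpha>" using inv tpos by simp
    then show ?thesis using apos by (simp add: field_simps)
  qed
  have finP: "finite F" unfolding F_def P_def by (rule finite_set_Pi_bool) simp
  have cpos: "c > 0" using g by (simp add: c_def \<kappa>_def)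
  have A: "measure_pmf.expectation P (\<lambda>y. cos (u * (S y - x0))) \<le> exp (- c * u\<^sup>2)"
    if "u \<in> {0..2*\<alpha>}" for u
  proof -
    have "\<bar>u\<bar> * \<tau> \<le> 2 * \<alpha> * \<tau>" using that tpos by (intro mult_right_mono) auto
    also have "\<dots> \<le> 2 * (7/5)" using at by simp
    finally have ub: "\<bar>u\<bar> * \<tau> \<le> 2 * (7/5)" .
    show ?thesis
      using ecos_bound[OF tau sw less_imp_le[OF g(1)] g(2) ub, of x x0]
      unfolding P_def S_def c_def \<kappa>_def by simp
  qed
  have I: "integrable (measure_pmf P) f" for f :: "(nat \<Rightarrow> bool) \<Rightarrow> real"
    using finP unfolding F_def by (rule integrable_measure_pmf_finite)
  have "measure_pmf.prob P {y. S y \<in> {a..b}} = measure_pmf.expectation P (indicator {y. S y \<in> {a..b}})"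
    by (simp add: measure_pmf.emeasure_eq_measure)
  also have "\<dots> \<le> measure_pmf.expectation P (\<lambda>y. K (S y - x0) / (\<alpha> * m))"
  proof (rule integral_mono[OF I I])
    fix y
    show "indicator {y. S y \<in> {a..b}} y \<le> K (S y - x0) / (\<alpha> * m)"
    proof (cases "S y \<in> {a..b}")
      case True
      then have "S y - x0 \<le> h" "- (S y - x0) \<le> h" by (auto simp: x0_def h_def field_simps)
      then have "\<bar>S y - x0\<bar> \<le> h" by (simp only: abs_le_iff)
      from K_lower[OF apos this ah] have "\<alpha> * m \<le> K (S y - x0)" by (simp add: K_def m_def)
      then show ?thesis using True apos by (simp add: m_def)
    next
      case False
      then show ?thesis using K_nonneg[OF apos] apos by (simp add: K_def m_def)
    qed
  qed
  also have "\<dots> = measure_pmf.expectation P (\<lambda>y. K (S y - x0)) / (\<alpha> * m)"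
    by simp
  finally have B: "measure_pmf.prob P {y. S y \<in> {a..b}} \<le> measure_pmf.expectation P (\<lambda>y. K (S y - x0)) / (\<alpha> * m)" .
  have EK: "measure_pmf.expectation P (\<lambda>y. K (S y - x0)) = (\<Sum>f\<in>F. K (S f - x0) * pmf P f)"
    using finP unfolding F_def by (intro integral_measure_pmf_real) auto
  have EC: "measure_pmf.expectation P (\<lambda>y. cos (u * (S y - x0))) = (\<Sum>f\<in>F. cos (u * (S f - x0)) * pmf P f)" for u
    using finP unfolding F_def by (intro integral_measure_pmf_real) auto
  have hs: "((\<lambda>u. \<Sum>f\<in>F. (1 - u / (2*\<alpha>)) * cos (u * (S f - x0)) * pmf P f) has_integral
              (\<Sum>f\<in>F. K (S f - x0) * pmf P f)) {0..2*\<alpha>}"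
    using finP apos unfolding K_def
    by (intro has_integral_sum has_integral_mult_left kernel_has_integral) auto
  have eqf: "(\<Sum>f\<in>F. (1 - u / (2*\<alpha>)) * cos (u * (S f - x0)) * pmf P f)
      = (1 - u / (2*\<alpha>)) * measure_pmf.expectation P (\<lambda>y. cos (u * (S y - x0)))" for u
    by (simp add: EC sum_distrib_left mult.assoc)
  have hexp: "((\<lambda>u. exp (- c * u\<^sup>2)) has_integral integral {0..2*\<alpha>} (\<lambda>u. exp (- c * u\<^sup>2))) {0..2*\<alpha>}"
    by (intro integrable_integral integrable_continuous_interval continuous_intros)
  have "(\<Sum>f\<in>F. K (S f - x0) * pmf P f) \<le> integral {0..2*\<alpha>} (\<lambda>u. exp (- c * u\<^sup>2))"
  proof (rule has_integral_le[OF hs hexp])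
    fix u assume u: "u \<in> {0..2*\<alpha>}"
    have g0: "0 \<le> 1 - u / (2*\<alpha>)" "1 - u / (2*\<alpha>) \<le> 1" using u apos by (auto simp: field_simps)
    define E where "E = measure_pmf.expectation P (\<lambda>y. cos (u * (S y - x0)))"
    have "E \<le> exp (- c * u\<^sup>2)" using A[OF u] by (simp add: E_def)
    moreover have "(1 - u / (2*\<alpha>)) * E \<le> exp (- c * u\<^sup>2)"
    proof (cases "E \<le> 0")
      case True
      then have "(1 - u / (2*\<alpha>)) * E \<le> 0" using g0 by (simp add: mult_nonneg_nonpos)
      also have "0 \<le> exp (- c * u\<^sup>2)" by simp
      finally show ?thesis .
    next
      case False
      then have "(1 - u / (2*\<alpha>)) * E \<le> 1 * E" using g0 by (intro mult_right_mono) auto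
      then show ?thesis using \<open>E \<le> exp (- c * u\<^sup>2)\<close> by simp
    qed
    then show "(\<Sum>f\<in>F. (1 - u / (2*\<alpha>)) * cos (u * (S f - x0)) * pmf P f) \<le> exp (- c * u\<^sup>2)"
      by (simp add: eqf E_def)
  qed
  also have "\<dots> \<le> sqrt pi / (2 * sqrt c)"
    using cpos apos by (intro gauss_bound) auto
  finally have C: "measure_pmf.expectation P (\<lambda>y. K (S y - x0)) \<le> sqrt pi / (2 * sqrt c)"
    using EK by simp
  have sg: "sqrt \<gamma> > 0" using g by simp
  have sc: "sqrt c = sqrt \<gamma> * \<kappa> / (2 * sqrt 2)"
  proof -
    have "sqrt c = sqrt \<gamma> * sqrt (\<kappa>\<^sup>2) / sqrt 8"
      by (simp add: c_def real_sqrt_mult real_sqrt_divide)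
    moreover have "sqrt (8::real) = 2 * sqrt 2"
      using real_sqrt_mult[of 4 2] by simp
    moreover have "sqrt (\<kappa>\<^sup>2) = \<kappa>" by (simp add: \<kappa>_def)
    ultimately show ?thesis by simp
  qed
  have s2pi: "sqrt 2 * sqrt pi \<le> 251/100"
  proof -
    have "sqrt 2 * sqrt pi = sqrt (2 * pi)" by (simp add: real_sqrt_mult)
    also have "\<dots> \<le> sqrt ((251/100)\<^sup>2)"
      using pi_approx(2) by (intro real_sqrt_le_mono) (simp add: power2_eq_square)
    also have "\<dots> = 251/100" by simp
    finally show ?thesis .
  qed
  have kpos: "\<kappa> > 0" and mpos: "m > 0" by (simp_all add: \<kappa>_def m_def)
  have s2: "sqrt 2 > (0::real)" by simp
  have "measure_pmf.prob P {y. S y \<in> {a..b}} \<le> (sqrt pi / (2 * sqrt c)) / (\<alpha> * m)"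
    by (rule order_trans[OF B divide_right_mono[OF C]]) (use apos mpos in simp)
  also have "(sqrt pi / (2 * sqrt c)) / (\<alpha> * m) = (sqrt 2 * sqrt pi) * (1/\<alpha>) / (\<kappa> * m * sqrt \<gamma>)"
    unfolding sc using sg apos kpos mpos s2 by (simp add: field_simps)
  also have "\<dots> \<le> (251/100) * (1/\<alpha>) / (\<kappa> * m * sqrt \<gamma>)"
    using s2pi apos sg kpos mpos by (intro divide_right_mono mult_right_mono) auto
  also have "\<dots> = (251/100) * (\<tau> / (7/5) + (b - a) / (6/5)) / (\<kappa> * m * sqrt \<gamma>)"
    by (simp add: inv h_def)
  also have "\<dots> \<le> (4 * (b - a) + 4 * \<tau>) / sqrt \<gamma>"
  proof -
    have "(251/100) * (\<tau> / (7/5) + (b - a) / (6/5)) \<le> (\<kappa> * m) * (4 * (b - a) + 4 * \<tau>)"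
    proof -
      have k: "\<kappa> * m = 223109/375000" by (simp add: \<kappa>_def m_def power2_eq_square)
      have e: "(251/100) * (\<tau> / (7/5) + (b - a) / (6/5)) = (251/140) * \<tau> + (251/120) * (b - a)"
        by (simp add: field_simps)
      have i1: "251/140 * \<tau> \<le> (4*223109/375000) * \<tau>" by (rule mult_right_mono) (use tpos in auto)
      have i2: "251/120 * (b - a) \<le> (4*223109/375000) * (b - a)" by (rule mult_right_mono) (use ab in auto)
      have eq0: "\<And>k d t :: real. k * (4 * d + 4 * t) = (4 * k) * t + (4 * k) * d"
        by (simp add: algebra_simps)
      have eq: "(223109/375000::real) * (4 * (b - a) + 4 * \<tau>) = (4*223109/375000) * \<tau> + (4*223109/375000) * (b - a)"
        using eq0[of "223109/375000" "b - a" \<tau>] by simp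
      show ?thesis unfolding k e eq using i1 i2 by linarith
    qed
    then have "(251/100) * (\<tau> / (7/5) + (b - a) / (6/5)) / (\<kappa> * m) \<le> 4 * (b - a) + 4 * \<tau>"
      using kpos mpos by (simp add: divide_le_eq mult.commute)
    then have "(251/100) * (\<tau> / (7/5) + (b - a) / (6/5)) / (\<kappa> * m) / sqrt \<gamma> \<le> (4 * (b - a) + 4 * \<tau>) / sqrt \<gamma>"
      using sg by (intro divide_right_mono) auto
    then show ?thesis by (simp add: divide_divide_eq_left mult.assoc)
  qed
  also have "\<dots> = 4 * (b - a) / sqrt \<gamma> + 4 * \<tau> / sqrt \<gamma>" by (simp add: add_divide_distrib)
  finally show ?thesis unfolding P_def S_def .
qed




lemma prob_bind_le:
  fixes D :: "'a pmf" and N :: "'a \<Rightarrow> 'b pmf"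
  assumes "\<And>x. measure_pmf.prob (N x) E \<le> B" "B \<ge> 0"
  shows "measure_pmf.prob (bind_pmf D N) E \<le> B"
proof -
  have "ennreal (measure_pmf.prob (bind_pmf D N) E) = emeasure (measure_pmf (bind_pmf D N)) E"
    by (simp add: measure_pmf.emeasure_eq_measure)
  also have "\<dots> = (\<integral>\<^sup>+x. emeasure (N x) E \<partial>D)" by simp
  also have "\<dots> \<le> (\<integral>\<^sup>+x. ennreal B \<partial>D)"
    using assms(1) by (intro nn_integral_mono) (simp add: measure_pmf.emeasure_eq_measure ennreal_leI)
  also have "\<dots> = ennreal B" by (simp add: measure_pmf.emeasure_space_1)
  finally show ?thesis using assms(2) by (simp add: ennreal_le_iff)
qed

theorem lemma2p3:
  fixes n :: nat and \<tau> \<gamma> a b :: real and w :: "nat \<Rightarrow> real"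
    and D :: "(nat \<Rightarrow> bool) pmf"
  assumes "tau_regular n \<tau> w"
    and "(\<Sum>i<n. (w i)\<^sup>2) = 1"
    and "0 < \<gamma>" and "\<gamma> \<le> 1"
  shows "measure_pmf.prob (noisy_version n \<gamma> D) {y. bit_inner n w y \<in> {a..b}}
    \<le> 4 * \<bar>b - a\<bar> / sqrt \<gamma> + 4 * \<tau> / sqrt \<gamma> + 2 * exp (- (\<gamma>\<^sup>2) / (2 * \<tau>\<^sup>2))"
proof -
  have tau: "\<forall>i<n. \<bar>w i\<bar> \<le> \<tau>" using assms(1,2) by (simp add: tau_regular_def)
  obtain i where i: "i < n" "w i \<noteq> 0"
  proof (rule ccontr)
    assume "\<not> thesis"
    with that have "\<forall>i<n. w i = 0" by blast
    then have "(\<Sum>i<n. (w i)\<^sup>2) = 0" by simp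
    with assms(2) show False by simp
  qed
  have tpos: "\<tau> > 0" using tau i by force
  have bi: "bit_inner n w = SS {..<n} w" by (simp add: fun_eq_iff bit_inner_def SS_def)
  have sg: "sqrt \<gamma> > 0" using assms(3) by simp
  have R0: "0 \<le> 4 * \<bar>b - a\<bar> / sqrt \<gamma> + 4 * \<tau> / sqrt \<gamma>" using sg tpos by simp
  have R: "4 * \<bar>b - a\<bar> / sqrt \<gamma> + 4 * \<tau> / sqrt \<gamma> \<le>
           4 * \<bar>b - a\<bar> / sqrt \<gamma> + 4 * \<tau> / sqrt \<gamma> + 2 * exp (- (\<gamma>\<^sup>2) / (2 * \<tau>\<^sup>2))" by simp
  show ?thesis
  proof (cases "a \<le> b")
    case False
    then have "{y. bit_inner n w y \<in> {a..b}} = {}" by auto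
    then have "measure_pmf.prob (noisy_version n \<gamma> D) {y. bit_inner n w y \<in> {a..b}} = 0" by (simp only: measure_empty)
    then show ?thesis using R0 R by linarith
  next
    case True
    have "measure_pmf.prob (noisy_version n \<gamma> D) {y. bit_inner n w y \<in> {a..b}}
          \<le> 4 * \<bar>b - a\<bar> / sqrt \<gamma> + 4 * \<tau> / sqrt \<gamma>"
      unfolding noisy_version_def bi
    proof (rule prob_bind_le[OF _ R0])
      fix x
      show "measure_pmf.prob (Pi_pmf {..<n} False (\<lambda>i. noisy_bit \<gamma> (x i))) {y. SS {..<n} w y \<in> {a..b}}
          \<le> 4 * \<bar>b - a\<bar> / sqrt \<gamma> + 4 * \<tau> / sqrt \<gamma>"
        using per_x[OF tau tpos assms(2) assms(3) assms(4) True, of x] True by simp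
    qed
    then show ?thesis using R by linarith
  qed
qed


end
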